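(* Let $\{A_n\}_{n\geq1}$ be an increasing sequence of finite sets of isolated points of $\mathbb{R}^2$ with $f(n)=\sharp A_n\to+\infty$, $S=\bigcup_n A_n$, and $\{Z(x):x\in S\}$ a random field whose variables all have distribution function $F$, $\overline F=1-F$. Let $\tau>0$ and $\{u_n(\tau)\}$ be reals with $E\big(\sum_{x\in A_n}\mathbf{1}_{\{Z(x)>u_n(\tau)\}}\big)\to\tau$. Suppose $\mathbf{Z}_A=\{Z(x):x\in A_n\}_{n\ge1}$ satisfies $D(u_n(\tau),k_n,l_n)$ and let, for each $n$, $\mathcal{B}_n=\{B_n^{(s,t)}:s,t=1,\dots,k_n\}$ be a family of $k_n^2$ pairwise disjoint subsets of $A_n$ with $\sharp B_n^{(s,t)}\sim f(n)/k_n^2$ and $P(\bigvee_{x\in A_n}Z(x)\le u_n(\tau))-\prod_{s,t}P(\bigvee_{x\in B_n^{(s,t)}}Z(x)\le u_n(\tau))\to0$. Write $N_n^{(s,t)}=\sum_{x\in B_n^{(s,t)}}\mathbf 1_{\{Z(x)>u_n(\tau)\}}$. If $\mathbf{Z}_A$ has spatial extremal index $\theta_A$, then $$\theta_A=\lim_{n\to+\infty}\frac{1}{k_n^2}\sum_{B_n^{(s,t)}\in\mathcal{B}_n}\Big(E\big(N_n^{(s,t)}\,\big|\,N_n^{(s,t)}>0\big)\Big)^{-1}.$$ Moreover, if $\lim_{n\to\infty}E(N_n^{(s,t)}\mid N_n^{(s,t)}>0)=1$ uniformly in $s,t\in\{1,\dots,k_n\}$, then $\theta_A=1$.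
   Context: $\pi_1,\pi_2$ are coordinate projections; $f_i(n)=\sharp\pi_i(A_n)$; $\bigvee$ is maximum. The pair $(I,J)$ is in $\mathcal{S}(\pi_i(A_n),l_n)$ if $I,J$ are sets of consecutive values of $\pi_i(A_n)$ separated by at least $l_n$ values of $\pi_i(A_n)$. Condition $D(u_n,k_n,l_n)$: there are positive integer sequences $l_n\to\infty$, $k_n\to\infty$ with $k_nl_nf_i(n)/f(n)\to0$ ($i=1,2$) and $k_n^2\alpha(l_n,u_n)\to0$, where $\alpha(l_n,u_n)=\sup|P(\bigvee_{x\in C\cup D}Z(x)\le u_n)-P(\bigvee_{x\in C}Z(x)\le u_n)P(\bigvee_{x\in D}Z(x)\le u_n)|$ over subsets $C,D\subseteq A_n$ whose $\pi_i$-projections form a pair in $\mathcal{S}(\pi_i(A_n),l_n)$ for each $i$. Spatial extremal index: $\mathbf{Z}_A$ has spatial extremal index $\theta_A$ if for each $\tau>0$ and any real sequence $\{u_n(\tau)\}$ with $E(\sum_{x\in A_n}\mathbf 1_{\{Z(x)>u_n(\tau)\}})\to\tau$ one has $P(\bigvee_{x\in A_n}Z(x)\le u_n(\tau))\to e^{-\theta_A\tau}$. *)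

theory Defs
  imports "HOL-Probability.Probability"
begin

definition consecutive_in :: "real set \<Rightarrow> real set \<Rightarrow> bool" where
  "consecutive_in T I \<longleftrightarrow> I \<noteq> {} \<and> finite I \<and> I \<subseteq> T \<and>
     (\<forall>t\<in>T. Min I \<le> t \<and> t \<le> Max I \<longrightarrow> t \<in> I)"

definition sep_pairs :: "real set \<Rightarrow> nat \<Rightarrow> (real set \<times> real set) set" where
  "sep_pairs T l = {(I, J). consecutive_in T I \<and> consecutive_in T J \<and>
     ((Max I < Min J \<and> card {t\<in>T. Max I < t \<and> t < Min J} \<ge> l) \<or>
      (Max J < Min I \<and> card {t\<in>T. Max J < t \<and> t < Min I} \<ge> l))}"

definition max_le_event :: "'w measure \<Rightarrow> (real \<times> real \<Rightarrow> 'w \<Rightarrow> real) \<Rightarrow> (real \<times> real) set \<Rightarrow> real \<Rightarrow> 'w set" where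
  "max_le_event M Z C u = {\<omega>\<in>space M. \<forall>x\<in>C. Z x \<omega> \<le> u}"

text \<open>Mixing coefficient alpha(l_n,u_n) (for the n-th set A_n); the supremum is over a finite set
  of nonnegative numbers, 0 is included so that the supremum is well defined.\<close>
definition mixing_coeff :: "'w measure \<Rightarrow> (real \<times> real \<Rightarrow> 'w \<Rightarrow> real) \<Rightarrow> (nat \<Rightarrow> (real \<times> real) set)
    \<Rightarrow> (nat \<Rightarrow> nat) \<Rightarrow> (nat \<Rightarrow> real) \<Rightarrow> nat \<Rightarrow> real" where
  "mixing_coeff M Z A l u n = Sup (insert 0
     {\<bar>measure M (max_le_event M Z (C \<union> D) (u n))
        - measure M (max_le_event M Z C (u n)) * measure M (max_le_event M Z D (u n))\<bar> | C D.
       C \<subseteq> A n \<and> D \<subseteq> A n \<and>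
       (fst ` C, fst ` D) \<in> sep_pairs (fst ` A n) (l n) \<and>
       (snd ` C, snd ` D) \<in> sep_pairs (snd ` A n) (l n)})"

definition cond_D :: "'w measure \<Rightarrow> (real \<times> real \<Rightarrow> 'w \<Rightarrow> real) \<Rightarrow> (nat \<Rightarrow> (real \<times> real) set)
    \<Rightarrow> (nat \<Rightarrow> real) \<Rightarrow> (nat \<Rightarrow> nat) \<Rightarrow> (nat \<Rightarrow> nat) \<Rightarrow> bool" where
  "cond_D M Z A u k l \<longleftrightarrow>
     (\<forall>n. 0 < k n \<and> 0 < l n) \<and>
     filterlim l at_top sequentially \<and> filterlim k at_top sequentially \<and>
     (\<lambda>n. real (k n) * real (l n) * real (card (fst ` A n)) / real (card (A n))) \<longlonglongrightarrow> 0 \<and>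
     (\<lambda>n. real (k n) * real (l n) * real (card (snd ` A n)) / real (card (A n))) \<longlonglongrightarrow> 0 \<and>
     (\<lambda>n. (real (k n))\<^sup>2 * mixing_coeff M Z A l u n) \<longlonglongrightarrow> 0"

definition exceed_count :: "(real \<times> real \<Rightarrow> 'w \<Rightarrow> real) \<Rightarrow> (real \<times> real) set \<Rightarrow> real \<Rightarrow> 'w \<Rightarrow> real" where
  "exceed_count Z B u \<omega> = (\<Sum>x\<in>B. if Z x \<omega> > u then 1 else 0)"

definition spatial_extremal_index :: "'w measure \<Rightarrow> (real \<times> real \<Rightarrow> 'w \<Rightarrow> real) \<Rightarrow> (nat \<Rightarrow> (real \<times> real) set) \<Rightarrow> real \<Rightarrow> bool" where
  "spatial_extremal_index M Z A \<theta> \<longleftrightarrow>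
     (\<forall>\<tau>>0. \<forall>v :: nat \<Rightarrow> real.
        (\<lambda>n. integral\<^sup>L M (exceed_count Z (A n) (v n))) \<longlonglongrightarrow> \<tau> \<longrightarrow>
        (\<lambda>n. measure M (max_le_event M Z (A n) (v n))) \<longlonglongrightarrow> exp (- \<theta> * \<tau>))"

definition cond_exp_pos :: "'w measure \<Rightarrow> ('w \<Rightarrow> real) \<Rightarrow> real" where
  "cond_exp_pos M N = integral\<^sup>L M (\<lambda>\<omega>. N \<omega> * indicator {\<omega>\<in>space M. N \<omega> > 0} \<omega>)
                        / measure M {\<omega>\<in>space M. N \<omega> > 0}"

end

theory Submission
  imports Defs
begin

lemma frac_aux: "(x::real) > 0 \<Longrightarrow> t > 0 \<Longrightarrow> p / x - p / t = p * (t - x) / (x * t)"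
  by (simp add: field_simps)

lemma abs_aux: "(x::real) > 0 \<Longrightarrow> t > 0 \<Longrightarrow> p \<ge> 0 \<Longrightarrow> \<bar>p * y / (x * t)\<bar> = p * \<bar>y\<bar> / (x * t)"
  by (simp add: abs_divide abs_mult)

lemma abstract_lim:
  fixes p e :: "nat \<Rightarrow> 'i \<Rightarrow> real" and J :: "nat \<Rightarrow> 'i set" and d :: "nat \<Rightarrow> real"
  assumes fin: "\<And>n. finite (J n)"
  and Kinf: "filterlim (\<lambda>n. real (card (J n))) at_top sequentially"
  and p0: "\<And>n i. i \<in> J n \<Longrightarrow> 0 \<le> p n i"
  and pe: "\<And>n i. i \<in> J n \<Longrightarrow> p n i \<le> e n i"
  and d0: "d \<longlonglongrightarrow> 0"
  and de: "\<And>n i. i \<in> J n \<Longrightarrow> \<bar>real (card (J n)) * e n i - \<tau>\<bar> \<le> d n"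
  and tau: "\<tau> > 0"
  and prod: "(\<lambda>n. \<Prod>i\<in>J n. 1 - p n i) \<longlonglongrightarrow> exp (-\<theta>*\<tau>)"
  shows "(\<lambda>n. (1/real(card(J n))) * (\<Sum>i\<in>J n. p n i / e n i)) \<longlonglongrightarrow> \<theta>"
proof -
  define K where "K n = real (card (J n))" for n
  define m where "m n = (\<tau> + d n) / K n" for n
  define q where "q n = (\<Sum>i\<in>J n. p n i)" for n
  have m0: "m \<longlonglongrightarrow> 0"
    unfolding m_def K_def
    by (rule tendsto_divide_0[OF tendsto_add[OF tendsto_const d0] filterlim_at_top_imp_at_infinity[OF Kinf]])
  have ev: "eventually (\<lambda>n. K n \<ge> 1 \<and> \<bar>d n\<bar> \<le> \<tau>/2 \<and> m n \<le> 1/2) sequentially"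
  proof -
    have "eventually (\<lambda>n. K n \<ge> 1) sequentially"
      using Kinf unfolding K_def filterlim_at_top by blast
    moreover have "eventually (\<lambda>n. \<bar>d n\<bar> < \<tau>/2) sequentially"
    proof -
      have "eventually (\<lambda>n. dist (d n) 0 < \<tau>/2) sequentially" by (rule tendstoD[OF d0]) (use tau in simp)
      thus ?thesis by (simp add: dist_real_def)
    qed
    moreover have "eventually (\<lambda>n. \<bar>m n\<bar> < 1/2) sequentially"
    proof -
      have "eventually (\<lambda>n. dist (m n) 0 < 1/2) sequentially" by (rule tendstoD[OF m0]) simp
      thus ?thesis by (simp add: dist_real_def)
    qed
    ultimately show ?thesis by eventually_elim auto
  qed
  have key: "\<bar>ln (\<Prod>i\<in>J n. 1 - p n i) + q n\<bar> \<le> 3 * \<tau> * m n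
      \<and> \<bar>(1/K n) * (\<Sum>i\<in>J n. p n i / e n i) - q n / \<tau>\<bar> \<le> 3 * \<bar>d n\<bar> / \<tau>"
    if H: "K n \<ge> 1" "\<bar>d n\<bar> \<le> \<tau>/2" "m n \<le> 1/2" for n
  proof -
    have Kpos: "K n > 0" using H by auto
    have e_lo: "e n i \<ge> \<tau> / (2 * K n)" if "i \<in> J n" for i
    proof -
      have "K n * e n i \<ge> \<tau> / 2" using de[OF that] H unfolding K_def by linarith
      thus ?thesis using Kpos by (simp add: field_simps)
    qed
    have e_hi: "e n i \<le> m n" if "i \<in> J n" for i
    proof -
      have "K n * e n i \<le> \<tau> + d n" using de[OF that] unfolding K_def by linarith
      thus ?thesis using Kpos unfolding m_def by (simp add: field_simps)
    qed
    have p_hi: "p n i \<le> m n" if "i \<in> J n" for i using e_hi[OF that] pe[OF that] by linarith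
    have q0: "q n \<ge> 0" unfolding q_def by (rule sum_nonneg) (use p0 in auto)
    have qb: "q n \<le> 3 * \<tau> / 2"
    proof -
      have "q n \<le> (\<Sum>i\<in>J n. m n)" unfolding q_def by (rule sum_mono) (use p_hi in auto)
      also have "\<dots> = K n * m n" by (simp add: K_def)
      also have "\<dots> = \<tau> + d n" using Kpos by (simp add: m_def)
      finally show ?thesis using H by linarith
    qed
    have lnP: "ln (\<Prod>i\<in>J n. 1 - p n i) = (\<Sum>i\<in>J n. ln (1 - p n i))"
      by (rule ln_prod[OF fin]) (use p_hi H in fastforce)
    have l1: "ln (1 - p n i) \<le> - p n i" if "i \<in> J n" for i
      by (rule ln_one_minus_pos_upper_bound) (use p0[OF that] p_hi[OF that] H in auto)
    have l2: "- p n i - 2 * m n * p n i \<le> ln (1 - p n i)" if "i \<in> J n" for i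
    proof -
      have "- p n i - 2 * (p n i)\<^sup>2 \<le> ln (1 - p n i)"
        by (rule ln_one_minus_pos_lower_bound) (use p0[OF that] p_hi[OF that] H in auto)
      moreover have "(p n i)\<^sup>2 \<le> m n * p n i"
        unfolding power2_eq_square using p0[OF that] p_hi[OF that] by (simp add: mult_right_mono)
      ultimately show ?thesis by linarith
    qed
    have s1: "(\<Sum>i\<in>J n. ln (1 - p n i)) \<le> - q n"
      unfolding q_def sum_negf[symmetric] by (rule sum_mono) (use l1 in auto)
    have s2: "- q n - 2 * m n * q n \<le> (\<Sum>i\<in>J n. ln (1 - p n i))"
    proof -
      have "(\<Sum>i\<in>J n. - p n i - 2 * m n * p n i) \<le> (\<Sum>i\<in>J n. ln (1 - p n i))"
        by (rule sum_mono) (use l2 in auto)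
      thus ?thesis unfolding q_def by (simp add: sum_subtractf sum_distrib_left sum_negf)
    qed
    have m0': "m n \<ge> 0" using H tau Kpos unfolding m_def by auto
    have "m n * (2 * q n) \<le> m n * (3 * \<tau>)" by (rule mult_left_mono) (use qb m0' in auto)
    hence "2 * m n * q n \<le> 3 * \<tau> * m n" by (simp add: algebra_simps)
    hence A: "\<bar>ln (\<Prod>i\<in>J n. 1 - p n i) + q n\<bar> \<le> 3 * \<tau> * m n"
      using s1 s2 lnP by linarith
    have trm: "\<bar>p n i / (K n * e n i) - p n i / \<tau>\<bar> \<le> p n i * (2 * \<bar>d n\<bar> / \<tau>\<^sup>2)" if "i \<in> J n" for i
    proof -
      have Ke: "K n * e n i \<ge> \<tau> / 2" using e_lo[OF that] Kpos by (simp add: field_simps)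
      have Kep: "K n * e n i > 0" using Ke tau by linarith
      have eq: "p n i / (K n * e n i) - p n i / \<tau> = p n i * (\<tau> - K n * e n i) / (K n * e n i * \<tau>)"
        using Kep tau by (rule frac_aux)
      have "\<bar>p n i * (\<tau> - K n * e n i) / (K n * e n i * \<tau>)\<bar> = p n i * \<bar>\<tau> - K n * e n i\<bar> / (K n * e n i * \<tau>)"
        using Kep tau p0[OF that] by (rule abs_aux)
      also have "\<dots> \<le> p n i * \<bar>d n\<bar> / (K n * e n i * \<tau>)"
        using de[OF that] p0[OF that] Kep tau unfolding K_def
        by (intro divide_right_mono mult_left_mono) auto
      also have "\<dots> \<le> p n i * \<bar>d n\<bar> / (\<tau> / 2 * \<tau>)"
      proof (rule divide_left_mono)
        show "\<tau> / 2 * \<tau> \<le> K n * e n i * \<tau>" using Ke tau by (simp add: mult_right_mono)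
        show "0 \<le> p n i * \<bar>d n\<bar>" using p0[OF that] by simp
        show "0 < K n * e n i * \<tau> * (\<tau> / 2 * \<tau>)" using Kep tau by simp
      qed
      also have "\<dots> = p n i * (2 * \<bar>d n\<bar> / \<tau>\<^sup>2)" by (simp add: power2_eq_square field_simps)
      finally show ?thesis using eq by simp
    qed
    have "(1/K n) * (\<Sum>i\<in>J n. p n i / e n i) - q n / \<tau> = (\<Sum>i\<in>J n. p n i / (K n * e n i) - p n i / \<tau>)"
      unfolding q_def by (simp add: sum_subtractf sum_distrib_left sum_divide_distrib)
    hence "\<bar>(1/K n) * (\<Sum>i\<in>J n. p n i / e n i) - q n / \<tau>\<bar> \<le> (\<Sum>i\<in>J n. p n i * (2 * \<bar>d n\<bar> / \<tau>\<^sup>2))"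
      using trm by (simp add: sum_abs order_trans[OF sum_abs sum_mono])
    also have "\<dots> = q n * (2 * \<bar>d n\<bar> / \<tau>\<^sup>2)" unfolding q_def by (rule sum_distrib_right[symmetric])
    also have "\<dots> \<le> 3 * \<tau> / 2 * (2 * \<bar>d n\<bar> / \<tau>\<^sup>2)" using qb by (intro mult_right_mono) auto
    also have "\<dots> = 3 * \<bar>d n\<bar> / \<tau>" using tau by (simp add: power2_eq_square field_simps)
    finally show ?thesis using A by simp
  qed
  have lim1: "(\<lambda>n. ln (\<Prod>i\<in>J n. 1 - p n i) + q n) \<longlonglongrightarrow> 0"
  proof (rule Lim_null_comparison)
    show "eventually (\<lambda>n. norm (ln (\<Prod>i\<in>J n. 1 - p n i) + q n) \<le> 3 * \<tau> * m n) sequentially"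
      using ev by eventually_elim (use key in auto)
    show "(\<lambda>n. 3 * \<tau> * m n) \<longlonglongrightarrow> 0" using tendsto_mult_right_zero[OF m0] by simp
  qed
  have lnl: "(\<lambda>n. ln (\<Prod>i\<in>J n. 1 - p n i)) \<longlonglongrightarrow> -\<theta>*\<tau>"
    using tendsto_ln[OF prod] by simp
  have qlim: "q \<longlonglongrightarrow> \<theta>*\<tau>"
    using tendsto_diff[OF lim1 lnl] by simp
  have lim2: "(\<lambda>n. (1/K n) * (\<Sum>i\<in>J n. p n i / e n i) - q n / \<tau>) \<longlonglongrightarrow> 0"
  proof (rule Lim_null_comparison)
    show "eventually (\<lambda>n. norm ((1/K n) * (\<Sum>i\<in>J n. p n i / e n i) - q n / \<tau>) \<le> 3 * \<bar>d n\<bar> / \<tau>) sequentially"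
      using ev by eventually_elim (use key in auto)
    have "(\<lambda>n. 3 * \<bar>d n\<bar> / \<tau>) \<longlonglongrightarrow> 3 * \<bar>0\<bar> / \<tau>"
      by (intro tendsto_intros d0) (use tau in auto)
    thus "(\<lambda>n. 3 * \<bar>d n\<bar> / \<tau>) \<longlonglongrightarrow> 0" by simp
  qed
  have ql: "(\<lambda>n. q n / \<tau>) \<longlonglongrightarrow> \<theta>*\<tau>/\<tau>"
    by (rule tendsto_divide[OF qlim tendsto_const]) (use tau in auto)
  have "(\<lambda>n. ((1/K n) * (\<Sum>i\<in>J n. p n i / e n i) - q n / \<tau>) + q n / \<tau>) \<longlonglongrightarrow> 0 + \<theta>*\<tau>/\<tau>"
    by (rule tendsto_add[OF lim2 ql])
  moreover have "0 + \<theta>*\<tau>/\<tau> = \<theta>" using tau by simp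
  ultimately show ?thesis unfolding K_def by simp
qed

lemma exc_facts:
  fixes Z :: "real \<times> real \<Rightarrow> 'w \<Rightarrow> real" and v :: real
  assumes M: "prob_space M" and fin: "finite B"
    and meas: "\<And>x. x \<in> B \<Longrightarrow> Z x \<in> borel_measurable M"
  defines "S \<equiv> {\<omega>\<in>space M. \<exists>x\<in>B. v < Z x \<omega>}"
  shows "S \<in> sets M"
   and "measure M (max_le_event M Z B v) = 1 - measure M S"
   and "integral\<^sup>L M (exceed_count Z B v) = (\<Sum>x\<in>B. measure M {\<omega>\<in>space M. v < Z x \<omega>})"
   and "cond_exp_pos M (exceed_count Z B v) = integral\<^sup>L M (exceed_count Z B v) / measure M S"
   and "measure M S \<le> (\<Sum>x\<in>B. measure M {\<omega>\<in>space M. v < Z x \<omega>})"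
proof -
  interpret prob_space M by (rule M)
  have Sx: "{\<omega>\<in>space M. v < Z x \<omega>} \<in> sets M" if "x \<in> B" for x
    using meas[OF that] by measurable
  have SU: "S = (\<Union>x\<in>B. {\<omega>\<in>space M. v < Z x \<omega>})" unfolding S_def by auto
  show S: "S \<in> sets M" unfolding SU by (rule sets.finite_UN[OF fin Sx])
  have "max_le_event M Z B v = space M - S"
    unfolding max_le_event_def S_def by (auto simp: not_less)
  thus "measure M (max_le_event M Z B v) = 1 - measure M S"
    using prob_compl[OF S] by simp
  have ii: "integrable M (indicator {\<omega>\<in>space M. v < Z x \<omega>} :: 'w \<Rightarrow> real)" if "x \<in> B" for x
    by (rule integrable_real_indicator[OF Sx[OF that]]) (simp add: less_top[symmetric])
  have "integral\<^sup>L M (exceed_count Z B v)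
      = integral\<^sup>L M (\<lambda>\<omega>. \<Sum>x\<in>B. indicator {\<omega>\<in>space M. v < Z x \<omega>} \<omega>)"
    by (rule Bochner_Integration.integral_cong) (auto simp: exceed_count_def indicator_def of_bool_def intro!: sum.cong)
  also have "\<dots> = (\<Sum>x\<in>B. integral\<^sup>L M (indicator {\<omega>\<in>space M. v < Z x \<omega>}))"
    by (rule Bochner_Integration.integral_sum) (use ii in auto)
  also have "\<dots> = (\<Sum>x\<in>B. measure M {\<omega>\<in>space M. v < Z x \<omega>})"
    by (rule sum.cong) (auto simp: Int_absorb2)
  finally show I: "integral\<^sup>L M (exceed_count Z B v) = (\<Sum>x\<in>B. measure M {\<omega>\<in>space M. v < Z x \<omega>})" .
  have N0: "exceed_count Z B v \<omega> \<ge> 0" for \<omega>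
    unfolding exceed_count_def by (rule sum_nonneg) auto
  have Npos: "exceed_count Z B v \<omega> > 0 \<longleftrightarrow> (\<exists>x\<in>B. v < Z x \<omega>)" for \<omega>
  proof -
    have "exceed_count Z B v \<omega> = 0 \<longleftrightarrow> (\<forall>x\<in>B. \<not> v < Z x \<omega>)"
      unfolding exceed_count_def by (subst sum_nonneg_eq_0_iff[OF fin]) auto
    thus ?thesis using N0[of \<omega>] by force
  qed
  have Seq: "{\<omega>\<in>space M. exceed_count Z B v \<omega> > 0} = S" unfolding S_def Npos ..
  have "integral\<^sup>L M (\<lambda>\<omega>. exceed_count Z B v \<omega> * indicator {\<omega>\<in>space M. exceed_count Z B v \<omega> > 0} \<omega>)
        = integral\<^sup>L M (exceed_count Z B v)"
  proof (rule Bochner_Integration.integral_cong)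
    fix \<omega> assume "\<omega> \<in> space M"
    thus "exceed_count Z B v \<omega> * indicator {\<omega>\<in>space M. exceed_count Z B v \<omega> > 0} \<omega> = exceed_count Z B v \<omega>"
      using N0[of \<omega>] by (auto simp: indicator_def)
  qed simp
  thus "cond_exp_pos M (exceed_count Z B v) = integral\<^sup>L M (exceed_count Z B v) / measure M S"
    unfolding cond_exp_pos_def Seq by simp
  show "measure M S \<le> (\<Sum>x\<in>B. measure M {\<omega>\<in>space M. v < Z x \<omega>})"
    unfolding SU by (rule finite_measure_subadditive_finite[OF fin]) (use Sx in auto)
qed

lemma inv_close:
  fixes c \<delta> :: real
  assumes "\<bar>c - 1\<bar> < \<delta>" "\<delta> \<le> 1/2"
  shows "\<bar>inverse c - 1\<bar> \<le> 2 * \<delta>"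
proof -
  have c: "c > 1/2" using assms by linarith
  have "inverse c - 1 = (1 - c) / c" using c by (simp add: field_simps)
  hence "\<bar>inverse c - 1\<bar> = \<bar>1 - c\<bar> / c" using c by (simp add: abs_divide)
  also have "\<dots> \<le> \<delta> / c" using assms c by (intro divide_right_mono) auto
  also have "\<dots> \<le> \<delta> / (1/2)" using assms c by (intro divide_left_mono) auto
  finally show ?thesis by simp
qed

lemma avg_close:
  fixes f :: "'i \<Rightarrow> real"
  assumes fin: "finite J" and ne: "card J > 0" and b: "\<And>i. i \<in> J \<Longrightarrow> \<bar>f i - 1\<bar> \<le> a"
  shows "\<bar>(1 / real (card J)) * (\<Sum>i\<in>J. f i) - 1\<bar> \<le> a"
proof -
  define K where "K = real (card J)"
  have K: "K > 0" using ne unfolding K_def by simp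
  have "(1/K) * (\<Sum>i\<in>J. f i) - 1 = (1/K) * (\<Sum>i\<in>J. f i - 1)"
    using K by (simp add: sum_subtractf K_def field_simps)
  also have "\<bar>\<dots>\<bar> \<le> (1/K) * (\<Sum>i\<in>J. \<bar>f i - 1\<bar>)"
    using K by (simp add: abs_mult divide_right_mono[OF sum_abs])
  also have "\<dots> \<le> (1/K) * (\<Sum>i\<in>J. a)"
    using K b by (intro mult_left_mono sum_mono) auto
  also have "\<dots> = a" using K by (simp add: K_def)
  finally show ?thesis unfolding K_def .
qed

theorem proposition2p3:
  fixes M :: "'w measure"
    and A :: "nat \<Rightarrow> (real \<times> real) set"
    and Z :: "real \<times> real \<Rightarrow> 'w \<Rightarrow> real"
    and F :: "real \<Rightarrow> real"
    and \<tau> :: real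
    and u :: "nat \<Rightarrow> real"
    and k :: "nat \<Rightarrow> nat"
    and B :: "nat \<Rightarrow> nat \<Rightarrow> nat \<Rightarrow> (real \<times> real) set"
    and \<theta> :: real
  assumes M: "prob_space M"
    and A_fin: "\<And>n. finite (A n)"
    and A_incr: "\<And>n. A n \<subseteq> A (Suc n)"
    and A_isolated: "\<And>x. x \<in> (\<Union>n. A n) \<Longrightarrow> \<not> x islimpt (\<Union>n. A n)"
    and A_card: "filterlim (\<lambda>n. card (A n)) at_top sequentially"
    and Z_meas: "\<And>x. x \<in> (\<Union>n. A n) \<Longrightarrow> Z x \<in> borel_measurable M"
    and Z_distr: "\<And>x v. x \<in> (\<Union>n. A n) \<Longrightarrow> measure M {\<omega>\<in>space M. Z x \<omega> \<le> v} = F v"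
    and tau_pos: "\<tau> > 0"
    and u_lim: "(\<lambda>n. integral\<^sup>L M (exceed_count Z (A n) (u n))) \<longlonglongrightarrow> \<tau>"
    and D: "\<exists>l. cond_D M Z A u k l"
    and B_sub: "\<And>n s t. s \<in> {1..k n} \<Longrightarrow> t \<in> {1..k n} \<Longrightarrow> B n s t \<subseteq> A n"
    and B_disj: "\<And>n s t s' t'. s \<in> {1..k n} \<Longrightarrow> t \<in> {1..k n} \<Longrightarrow> s' \<in> {1..k n} \<Longrightarrow> t' \<in> {1..k n}
                   \<Longrightarrow> (s, t) \<noteq> (s', t') \<Longrightarrow> B n s t \<inter> B n s' t' = {}"
    and B_card: "(\<lambda>n. Max {\<bar>real (card (B n s t)) * (real (k n))\<^sup>2 / real (card (A n)) - 1\<bar> | s t.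
                            s \<in> {1..k n} \<and> t \<in> {1..k n}}) \<longlonglongrightarrow> 0"
    and B_approx: "(\<lambda>n. measure M (max_le_event M Z (A n) (u n))
                       - (\<Prod>s\<in>{1..k n}. \<Prod>t\<in>{1..k n}. measure M (max_le_event M Z (B n s t) (u n))))
                    \<longlonglongrightarrow> 0"
    and SEI: "spatial_extremal_index M Z A \<theta>"
  shows "(\<lambda>n. (1 / (real (k n))\<^sup>2) *
            (\<Sum>s\<in>{1..k n}. \<Sum>t\<in>{1..k n}. inverse (cond_exp_pos M (exceed_count Z (B n s t) (u n)))))
           \<longlonglongrightarrow> \<theta>
      \<and> ((\<forall>\<epsilon>>0. \<exists>N. \<forall>n\<ge>N. \<forall>s\<in>{1..k n}. \<forall>t\<in>{1..k n}.
             \<bar>cond_exp_pos M (exceed_count Z (B n s t) (u n)) - 1\<bar> < \<epsilon>) \<longrightarrow> \<theta> = 1)"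
proof -
  obtain l where cD: "cond_D M Z A u k l" using D by blast
  have kpos: "\<And>n. 0 < k n" and kinf: "filterlim k at_top sequentially"
    using cD unfolding cond_D_def by auto
  interpret prob_space M by (rule M)
  define U where "U = (\<Union>n. A n)"
  define J where "J n = {1..k n} \<times> {1..k n}" for n
  define Fb where "Fb n = 1 - F (u n)" for n
  define p where "p n i = measure M {\<omega>\<in>space M. \<exists>x\<in>B n (fst i) (snd i). u n < Z x \<omega>}" for n i
  define e where "e n i = real (card (B n (fst i) (snd i))) * Fb n" for n i
  define aF where "aF n = real (card (A n)) * Fb n" for n
  define Mx where "Mx n = Max {\<bar>real (card (B n s t)) * (real (k n))\<^sup>2 / real (card (A n)) - 1\<bar> | s t.
                            s \<in> {1..k n} \<and> t \<in> {1..k n}}" for n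
  define d where "d n = Mx n * \<bar>aF n\<bar> + \<bar>aF n - \<tau>\<bar>" for n
  have AU: "A n \<subseteq> U" for n unfolding U_def by auto
  have measU: "Z x \<in> borel_measurable M" if "x \<in> U" for x using Z_meas that unfolding U_def by auto
  have exc: "measure M {\<omega>\<in>space M. v < Z x \<omega>} = 1 - F v" if "x \<in> U" for x v
  proof -
    have S: "{\<omega>\<in>space M. Z x \<omega> \<le> v} \<in> sets M" using measU[OF that] by measurable
    have "{\<omega>\<in>space M. v < Z x \<omega>} = space M - {\<omega>\<in>space M. Z x \<omega> \<le> v}" by auto
    thus ?thesis using prob_compl[OF S] Z_distr that unfolding U_def by simp
  qed
  have sumexc: "(\<Sum>x\<in>C. measure M {\<omega>\<in>space M. v < Z x \<omega>}) = real (card C) * (1 - F v)"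
    if "C \<subseteq> U" for C v
    using exc that by (simp add: subset_eq)
  have Bfin: "finite (B n s t)" "B n s t \<subseteq> U" if "s \<in> {1..k n}" "t \<in> {1..k n}" for n s t
    using B_sub[OF that] A_fin[of n] AU[of n] by (auto intro: finite_subset)
  have EFm: "\<And>x. x \<in> B n s t \<Longrightarrow> Z x \<in> borel_measurable M" if "s \<in> {1..k n}" "t \<in> {1..k n}" for n s t
    using measU Bfin(2)[OF that] by auto
  have PB: "measure M (max_le_event M Z (B n s t) (u n)) = 1 - p n (s,t)" if "s \<in> {1..k n}" "t \<in> {1..k n}" for n s t
    using exc_facts(2)[where Z=Z, OF M Bfin(1)[OF that] EFm[OF that]] unfolding p_def by simp
  have cardJ: "real (card (J n)) = (real (k n))\<^sup>2" for n
    unfolding J_def by (simp add: card_cartesian_product power2_eq_square)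
  have finJ: "finite (J n)" for n unfolding J_def by simp
  have invG: "inverse (cond_exp_pos M (exceed_count Z (B n s t) (u n))) = p n (s, t) / e n (s, t)"
    if "s \<in> {1..k n}" "t \<in> {1..k n}" for n s t
    using exc_facts(4)[where Z=Z, OF M Bfin(1)[OF that] EFm[OF that]] exc_facts(3)[where Z=Z, OF M Bfin(1)[OF that] EFm[OF that]] sumexc[OF Bfin(2)[OF that]]
    unfolding p_def e_def Fb_def by (simp add: inverse_divide)
  have sumG: "(\<Sum>s\<in>{1..k n}. \<Sum>t\<in>{1..k n}. f s t) = (\<Sum>i\<in>J n. f (fst i) (snd i))" for n and f :: "nat \<Rightarrow> nat \<Rightarrow> real"
    unfolding J_def sum.cartesian_product by (rule sum.cong) auto
  have Kinf: "filterlim (\<lambda>n. real (card (J n))) at_top sequentially"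
    unfolding cardJ
    by (rule filterlim_pow_at_top[OF _ filterlim_compose[OF filterlim_real_sequentially kinf]]) simp
  have p0: "0 \<le> p n i" for n i unfolding p_def by simp
  have pe: "p n i \<le> e n i" if "i \<in> J n" for n i
  proof -
    have s: "fst i \<in> {1..k n}" "snd i \<in> {1..k n}" using that unfolding J_def by auto
    show ?thesis using exc_facts(5)[where Z=Z, OF M Bfin(1)[OF s] EFm[OF s]] sumexc[OF Bfin(2)[OF s]] unfolding p_def e_def Fb_def by simp
  qed
  have aFlim: "aF \<longlonglongrightarrow> \<tau>"
  proof -
    have "integral\<^sup>L M (exceed_count Z (A n) (u n)) = aF n" for n
      using exc_facts(3)[where Z=Z and v="u n", OF M A_fin[of n] measU[OF subsetD[OF AU[of n]]]] sumexc[OF AU[of n]]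
      unfolding aF_def Fb_def by (auto simp: subset_eq)
    thus ?thesis using u_lim by simp
  qed
  have Mx0: "Mx \<longlonglongrightarrow> 0" using B_card unfolding Mx_def .
  have d0: "d \<longlonglongrightarrow> 0"
  proof -
    have "d \<longlonglongrightarrow> 0 * \<bar>\<tau>\<bar> + \<bar>\<tau> - \<tau>\<bar>"
      unfolding d_def by (intro tendsto_intros Mx0 aFlim)
    thus ?thesis by simp
  qed
  have de: "\<bar>real (card (J n)) * e n i - \<tau>\<bar> \<le> d n" if "i \<in> J n" for n i
  proof -
    have s: "fst i \<in> {1..k n}" "snd i \<in> {1..k n}" using that unfolding J_def by auto
    define c where "c = real (card (B n (fst i) (snd i)))"
    define a where "a = real (card (A n))"
    define r where "r = c * (real (k n))\<^sup>2 / a"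
    have ca: "c \<le> a" unfolding c_def a_def
      using card_mono[OF A_fin B_sub[OF s]] by simp
    have c0: "c \<ge> 0" unfolding c_def by simp
    have Ke: "real (card (J n)) * e n i = r * aF n"
    proof (cases "a = 0")
      case True
      then have "c = 0" using ca c0 by simp
      then show ?thesis using True unfolding cardJ e_def r_def aF_def c_def[symmetric] a_def[symmetric] by simp
    next
      case False
      then show ?thesis unfolding cardJ e_def r_def aF_def c_def[symmetric] a_def[symmetric] by simp
    qed
    have rM: "\<bar>r - 1\<bar> \<le> Mx n"
    proof -
      have fin: "finite {\<bar>real (card (B n s t)) * (real (k n))\<^sup>2 / real (card (A n)) - 1\<bar> | s t.
                            s \<in> {1..k n} \<and> t \<in> {1..k n}}"
        by (rule finite_image_set2) auto
      show ?thesis unfolding Mx_def r_def c_def a_def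
        by (rule Max_ge[OF fin]) (use s in blast)
    qed
    have "\<bar>r * aF n - \<tau>\<bar> = \<bar>(r - 1) * aF n + (aF n - \<tau>)\<bar>" by (simp add: algebra_simps)
    also have "\<dots> \<le> \<bar>r - 1\<bar> * \<bar>aF n\<bar> + \<bar>aF n - \<tau>\<bar>" by (simp add: abs_mult abs_triangle_ineq[THEN order_trans])
    also have "\<dots> \<le> Mx n * \<bar>aF n\<bar> + \<bar>aF n - \<tau>\<bar>" using rM by (simp add: mult_right_mono)
    finally show ?thesis unfolding Ke d_def .
  qed
  have prod: "(\<lambda>n. \<Prod>i\<in>J n. 1 - p n i) \<longlonglongrightarrow> exp (-\<theta>*\<tau>)"
  proof -
    have PA: "(\<lambda>n. measure M (max_le_event M Z (A n) (u n))) \<longlonglongrightarrow> exp (- \<theta> * \<tau>)"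
      using SEI tau_pos u_lim unfolding spatial_extremal_index_def by blast
    have eq: "(\<Prod>i\<in>J n. 1 - p n i) = (\<Prod>s\<in>{1..k n}. \<Prod>t\<in>{1..k n}. measure M (max_le_event M Z (B n s t) (u n)))" for n
      unfolding J_def prod.cartesian_product
      by (rule prod.cong) (auto simp: PB)
    have "(\<lambda>n. measure M (max_le_event M Z (A n) (u n)) - (measure M (max_le_event M Z (A n) (u n))
                       - (\<Prod>s\<in>{1..k n}. \<Prod>t\<in>{1..k n}. measure M (max_le_event M Z (B n s t) (u n)))))
          \<longlonglongrightarrow> exp (- \<theta> * \<tau>) - 0"
      by (rule tendsto_diff[OF PA B_approx])
    thus ?thesis unfolding eq by simp
  qed
  have lim: "(\<lambda>n. (1/real(card(J n))) * (\<Sum>i\<in>J n. p n i / e n i)) \<longlonglongrightarrow> \<theta>"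
    by (rule abstract_lim[OF finJ Kinf p0 pe d0 de tau_pos prod])
  have gdef: "(1 / (real (k n))\<^sup>2) *
            (\<Sum>s\<in>{1..k n}. \<Sum>t\<in>{1..k n}. inverse (cond_exp_pos M (exceed_count Z (B n s t) (u n))))
        = (1/real(card(J n))) * (\<Sum>i\<in>J n. inverse (cond_exp_pos M (exceed_count Z (B n (fst i) (snd i)) (u n))))" for n
    unfolding cardJ sumG ..
  have gdef2: "(\<Sum>i\<in>J n. inverse (cond_exp_pos M (exceed_count Z (B n (fst i) (snd i)) (u n))))
       = (\<Sum>i\<in>J n. p n i / e n i)" for n
    by (rule sum.cong) (auto simp: J_def invG)
  have part1: "(\<lambda>n. (1 / (real (k n))\<^sup>2) *
            (\<Sum>s\<in>{1..k n}. \<Sum>t\<in>{1..k n}. inverse (cond_exp_pos M (exceed_count Z (B n s t) (u n)))))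
           \<longlonglongrightarrow> \<theta>"
    unfolding gdef gdef2 by (rule lim)
  have part2: "\<theta> = 1" if Uh: "\<forall>\<epsilon>>0. \<exists>N. \<forall>n\<ge>N. \<forall>s\<in>{1..k n}. \<forall>t\<in>{1..k n}.
             \<bar>cond_exp_pos M (exceed_count Z (B n s t) (u n)) - 1\<bar> < \<epsilon>"
  proof -
    have "(\<lambda>n. (1 / (real (k n))\<^sup>2) *
            (\<Sum>s\<in>{1..k n}. \<Sum>t\<in>{1..k n}. inverse (cond_exp_pos M (exceed_count Z (B n s t) (u n)))))
           \<longlonglongrightarrow> 1"
      unfolding LIMSEQ_def dist_real_def gdef
    proof (intro allI impI)
      fix r :: real assume r: "r > 0"
      define \<delta> where "\<delta> = min (1/2) (r/4)"
      have "\<delta> > 0" using r unfolding \<delta>_def by simp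
      then obtain N where N: "\<forall>n\<ge>N. \<forall>s\<in>{1..k n}. \<forall>t\<in>{1..k n}.
             \<bar>cond_exp_pos M (exceed_count Z (B n s t) (u n)) - 1\<bar> < \<delta>" using Uh by blast
      show "\<exists>N. \<forall>n\<ge>N. \<bar>1 / real (card (J n)) *
               (\<Sum>i\<in>J n. inverse (cond_exp_pos M (exceed_count Z (B n (fst i) (snd i)) (u n)))) - 1\<bar> < r"
      proof (intro exI allI impI)
        fix n assume n: "n \<ge> N"
        have "\<bar>1 / real (card (J n)) *
               (\<Sum>i\<in>J n. inverse (cond_exp_pos M (exceed_count Z (B n (fst i) (snd i)) (u n)))) - 1\<bar> \<le> 2 * \<delta>"
        proof (rule avg_close[OF finJ])
          show "card (J n) > 0" using kpos[of n] unfolding J_def by (simp add: card_cartesian_product)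
          fix i assume "i \<in> J n"
          hence s: "fst i \<in> {1..k n}" "snd i \<in> {1..k n}" unfolding J_def by auto
          show "\<bar>inverse (cond_exp_pos M (exceed_count Z (B n (fst i) (snd i)) (u n))) - 1\<bar> \<le> 2 * \<delta>"
            by (rule inv_close) (use N n s in \<open>auto simp: \<delta>_def\<close>)
        qed
        also have "2 * \<delta> < r" using r unfolding \<delta>_def by simp
        finally show "\<bar>1 / real (card (J n)) *
               (\<Sum>i\<in>J n. inverse (cond_exp_pos M (exceed_count Z (B n (fst i) (snd i)) (u n)))) - 1\<bar> < r" .
      qed
    qed
    thus ?thesis using part1 LIMSEQ_unique by blast
  qed
  show ?thesis using part1 part2 by blast
qed

end
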